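(* Let $X$ be the circle $\mathbb{S}^1$ or the interval $[0,1]$, and let $f\colon X\to X$ be a homeomorphism. If $\mu$ is a Borel probability measure that is inner-distal with respect to $f$, then $\operatorname{supp}(\mu)\subseteq\Omega(f)$.
   Context: $\mathcal{P}(x)=\{y\colon \inf_{n\in\mathbb{Z}} d(f^n(x),f^n(y))=0\}$; $\mu$ is inner-distal w.r.t. $f$ if $\mu(\operatorname{Int}\mathcal{P}(x))=0$ for all $x$. $\operatorname{supp}(\mu)=\{x\colon \mu(U)>0$ for every neighborhood $U$ of $x\}$. The non-wandering set $\Omega(f)$ is the set of $x$ such that $U\cap\bigcup_{n\ge1}f^n(U)\neq\emptyset$ for every neighborhood $U$ of $x$. *)

theory Defs
  imports "HOL-Analysis.Analysis" "HOL-Probability.Probability"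
begin

definition zorbit :: "('a \<Rightarrow> 'a) \<Rightarrow> 'a set \<Rightarrow> int \<Rightarrow> 'a \<Rightarrow> 'a" where
  "zorbit f X n = (if n \<ge> 0 then f ^^ nat n else (inv_into X f) ^^ nat (- n))"

definition proximal_cell :: "('a::metric_space \<Rightarrow> 'a) \<Rightarrow> 'a set \<Rightarrow> 'a \<Rightarrow> 'a set" where
  "proximal_cell f X x =
     {y \<in> X. (INF n::int. dist (zorbit f X n x) (zorbit f X n y)) = 0}"

definition inner_distal :: "('a::metric_space \<Rightarrow> 'a) \<Rightarrow> 'a set \<Rightarrow> 'a measure \<Rightarrow> bool" where
  "inner_distal f X M \<longleftrightarrow>
     (\<forall>x\<in>X. emeasure M ((top_of_set X) interior_of (proximal_cell f X x)) = 0)"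

definition support_on :: "'a::topological_space set \<Rightarrow> 'a measure \<Rightarrow> 'a set" where
  "support_on X M = {x \<in> X. \<forall>U. openin (top_of_set X) U \<and> x \<in> U \<longrightarrow> emeasure M U > 0}"

definition nonwandering :: "('a::topological_space \<Rightarrow> 'a) \<Rightarrow> 'a set \<Rightarrow> 'a set" where
  "nonwandering f X = {x \<in> X. \<forall>U. openin (top_of_set X) U \<and> x \<in> U \<longrightarrow>
       (\<exists>n\<ge>1. U \<inter> (f ^^ n) ` U \<noteq> {})}"

end

theory Submission
  imports Defs
begin

lemma exp_i_lip:
  fixes a b :: real
  shows "cmod (exp (\<i> * of_real a) - exp (\<i> * of_real b)) \<le> \<bar>a - b\<bar>"
proof -
  define t where "t = a - b"
  have e: "exp (\<i> * of_real a) - exp (\<i> * of_real b) = exp (\<i> * of_real b) * (exp (\<i> * of_real t) - 1)"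
    by (simp add: t_def algebra_simps flip: exp_add)
  have "(cmod (exp (\<i> * of_real t) - 1))\<^sup>2 = (cos t - 1)\<^sup>2 + (sin t)\<^sup>2"
    by (simp add: cmod_power2 exp_Euler cos_of_real sin_of_real)
  also have "\<dots> = 2 - 2 * cos t" using sin_cos_squared_add[of t] by (simp add: power2_eq_square algebra_simps)
  also have "\<dots> = 4 * (sin (t/2))\<^sup>2" using cos_double_sin[of "t/2"] by simp
  also have "\<dots> \<le> 4 * (t/2)\<^sup>2"
  proof -
    have "(sin (t/2))\<^sup>2 \<le> (t/2)\<^sup>2" using abs_sin_x_le_abs_x[of "t/2"] abs_le_square_iff by blast
    then show ?thesis by simp
  qed
  also have "\<dots> = t\<^sup>2" by (simp add: power2_eq_square)
  finally have "cmod (exp (\<i> * of_real t) - 1) \<le> \<bar>t\<bar>"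
    using abs_le_square_iff by (metis abs_norm_cancel)
  then show ?thesis unfolding e norm_mult by (simp add: t_def)
qed

lemma grid_point:
  fixes \<delta> lo hi :: real
  assumes "\<delta> > 0" "\<delta> \<le> hi - lo"
  shows "lo \<le> ceiling (lo/\<delta>) * \<delta>" "ceiling (lo/\<delta>) * \<delta> \<le> hi"
proof -
  have j1: "lo/\<delta> \<le> ceiling (lo/\<delta>)" by linarith
  have j2: "ceiling (lo/\<delta>) < lo/\<delta> + 1" by linarith
  show "lo \<le> ceiling (lo/\<delta>) * \<delta>" using j1 assms(1) by (metis pos_divide_le_eq)
  have "ceiling (lo/\<delta>) * \<delta> < (lo/\<delta> + 1) * \<delta>" using j2 assms(1) by (simp add: mult_strict_right_mono)
  also have "\<dots> = lo + \<delta>" using assms(1) by (simp add: distrib_right)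
  finally show "ceiling (lo/\<delta>) * \<delta> \<le> hi" using assms(2) by linarith
qed

lemma small_grid:
  fixes \<epsilon> c :: real
  assumes "\<epsilon> > 0" "c > 0"
  obtains N :: nat where "N > 0" "c / N < \<epsilon>"
proof -
  obtain N :: nat where N: "c/\<epsilon> < N" using reals_Archimedean2 by blast
  have "0 < c/\<epsilon>" using assms by simp
  then have Np: "real N > 0" using N by linarith
  have "c < N * \<epsilon>" using N assms by (simp add: divide_less_eq)
  then have "c / N < \<epsilon>" using Np by (simp add: divide_less_eq mult.commute)
  then show ?thesis using that Np by simp
qed


lemma thin_interval:
  assumes "(\<epsilon>::real) > 0"
  shows "\<exists>F. finite F \<and> (\<forall>C a b. connected C \<longrightarrow> C \<subseteq> complex_of_real ` {0..1} \<longrightarrow>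
           a \<in> C \<longrightarrow> b \<in> C \<longrightarrow> \<epsilon> \<le> dist a b \<longrightarrow> C \<inter> F \<noteq> {})"
proof -
  obtain N :: nat where Np: "N > 0" and Ne: "1 / N < \<epsilon>" using small_grid[OF assms, of 1] by auto
  define \<delta> where "\<delta> = 1 / real N"
  have dp: "\<delta> > 0" using Np by (simp add: \<delta>_def)
  have Nd: "real N * \<delta> = 1" using Np by (simp add: \<delta>_def)
  define F where "F = (\<lambda>j::int. complex_of_real (j * \<delta>)) ` {0..int N}"
  have "C \<inter> F \<noteq> {}" if C: "connected C" "C \<subseteq> complex_of_real ` {0..1}" "a \<in> C" "b \<in> C" "\<epsilon> \<le> dist a b" for C a b
  proof -
    obtain ra where ra: "a = of_real ra" "ra \<in> {0..1}" using C by blast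
    obtain rb where rb: "b = of_real rb" "rb \<in> {0..1}" using C by blast
    define lo where "lo = min ra rb"
    define hi where "hi = max ra rb"
    have d: "dist a b = hi - lo" using ra rb by (simp add: lo_def hi_def dist_norm flip: of_real_diff)
    have conn: "connected (Re ` C)"
      by (rule connected_continuous_image[OF _ C(1)]) (intro continuous_intros)
    have "ra \<in> Re ` C" using ra C(3) by (metis Re_complex_of_real image_eqI)
    moreover have "rb \<in> Re ` C" using rb C(4) by (metis Re_complex_of_real image_eqI)
    ultimately have "lo \<in> Re ` C" "hi \<in> Re ` C" by (simp_all add: lo_def hi_def min_def max_def)
    then have sub: "{lo..hi} \<subseteq> Re ` C" using connected_contains_Icc[OF conn] by blast
    define j where "j = ceiling (lo / \<delta>)"
    have dle: "\<delta> \<le> hi - lo" using d C(5) Ne by (simp add: \<delta>_def)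
    have g1: "lo \<le> j * \<delta>" and g2: "j * \<delta> \<le> hi" using grid_point[OF dp dle] by (simp_all add: j_def)
    have "j * \<delta> \<in> Re ` C" using sub g1 g2 by auto
    then obtain z where z: "z \<in> C" "Re z = j * \<delta>" by (auto simp del: of_int_mult)
    have "z = of_real (Re z)" using z C(2) by auto
    then have zz: "z = complex_of_real (j * \<delta>)" using z by simp
    have "0 \<le> lo" using ra rb by (simp add: lo_def)
    then have "0 \<le> lo / \<delta>" using dp by simp
    then have "0 \<le> j" unfolding j_def by linarith
    moreover have "j \<le> int N"
    proof -
      have "hi \<le> 1" using ra rb by (simp add: hi_def)
      then have "j * \<delta> \<le> real N * \<delta>" using g2 Nd by linarith
      then have "real_of_int j \<le> real N" using dp by simp
      then show ?thesis by linarith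
    qed
    ultimately have "j \<in> {0..int N}" by simp
    then have "z \<in> F" unfolding F_def zz by (rule imageI)
    then show ?thesis using z by blast
  qed
  moreover have "finite F" unfolding F_def by simp
  ultimately show ?thesis by blast
qed

lemma thin_circle:
  assumes "(\<epsilon>::real) > 0"
  shows "\<exists>F. finite F \<and> (\<forall>C a b. connected C \<longrightarrow> C \<subseteq> sphere (0::complex) 1 \<longrightarrow>
           a \<in> C \<longrightarrow> b \<in> C \<longrightarrow> \<epsilon> \<le> dist a b \<longrightarrow> C \<inter> F \<noteq> {})"
proof -
  obtain N :: nat where Np: "N > 0" and Ne: "2*pi / N < \<epsilon>" using small_grid[OF assms, of "2*pi"] by auto
  define \<delta> where "\<delta> = 2*pi / real N"
  have dp: "\<delta> > 0" using Np by (simp add: \<delta>_def)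
  have Nd: "real N * \<delta> = 2*pi" using Np by (simp add: \<delta>_def)
  define F where "F = (\<lambda>j::int. exp (\<i> * of_real (j * \<delta>))) ` {0..int N}"
  have "C \<inter> F \<noteq> {}" if C: "connected C" "C \<subseteq> sphere 0 1" "a \<in> C" "b \<in> C" "\<epsilon> \<le> dist a b" for C a b
  proof (cases "1 \<in> C")
    case True
    have "(0::int) \<in> {0..int N}" by simp
    then have "exp (\<i> * of_real (real_of_int 0 * \<delta>)) \<in> F" unfolding F_def by (rule imageI)
    then have "1 \<in> F" by simp
    then show ?thesis using True by blast
  next
    case False
    have nr: "z \<notin> \<real>\<^sub>\<ge>\<^sub>0" if "z \<in> C" for z
    proof
      assume "z \<in> \<real>\<^sub>\<ge>\<^sub>0"
      then obtain r where r: "z = of_real r" "r \<ge> 0" by (auto elim: nonneg_Reals_cases)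
      have "norm z = 1" using that C(2) by auto
      then have "r = 1" using r by simp
      then show False using r False that by simp
    qed
    have cont: "continuous_on C Arg2pi"
      by (intro continuous_at_imp_continuous_on ballI continuous_at_Arg2pi nr)
    have conn: "connected (Arg2pi ` C)" by (rule connected_continuous_image[OF cont C(1)])
    have "norm a = 1" "norm b = 1" using C(2,3,4) by auto
    then have ea: "a = exp (\<i> * of_real (Arg2pi a))" and eb: "b = exp (\<i> * of_real (Arg2pi b))"
      using complex_norm_eq_1_exp by metis+
    define lo where "lo = min (Arg2pi a) (Arg2pi b)"
    define hi where "hi = max (Arg2pi a) (Arg2pi b)"
    have "dist a b \<le> \<bar>Arg2pi a - Arg2pi b\<bar>"
      using exp_i_lip[of "Arg2pi a" "Arg2pi b"] ea eb by (simp add: dist_norm)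
    moreover have "\<bar>Arg2pi a - Arg2pi b\<bar> = hi - lo" by (simp add: lo_def hi_def abs_if min_def max_def)
    ultimately have d: "\<epsilon> \<le> hi - lo" using C(5) by linarith
    have "lo \<in> Arg2pi ` C" "hi \<in> Arg2pi ` C" using C(3,4) by (simp_all add: lo_def hi_def min_def max_def)
    then have sub: "{lo..hi} \<subseteq> Arg2pi ` C" using connected_contains_Icc[OF conn] by blast
    define j where "j = ceiling (lo / \<delta>)"
    have dle: "\<delta> \<le> hi - lo" using d Ne by (simp add: \<delta>_def)
    have g1: "lo \<le> j * \<delta>" and g2: "j * \<delta> \<le> hi" using grid_point[OF dp dle] by (simp_all add: j_def)
    have "j * \<delta> \<in> Arg2pi ` C" using sub g1 g2 by auto
    then obtain z where z: "z \<in> C" "Arg2pi z = j * \<delta>" by (auto simp del: of_int_mult)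
    have "norm z = 1" using z C(2) by auto
    then have "z = exp (\<i> * of_real (Arg2pi z))" using complex_norm_eq_1_exp by metis
    then have zz: "z = exp (\<i> * of_real (j * \<delta>))" using z by simp
    have "0 \<le> lo" by (simp add: lo_def Arg2pi_ge_0)
    then have "0 \<le> lo / \<delta>" using dp by simp
    then have "0 \<le> j" unfolding j_def by linarith
    moreover have "j \<le> int N"
    proof -
      have "hi < 2*pi" by (simp add: hi_def Arg2pi_lt_2pi)
      then have "j * \<delta> \<le> real N * \<delta>" using g2 Nd by linarith
      then have "real_of_int j \<le> real N" using dp by simp
      then show ?thesis by linarith
    qed
    ultimately have "j \<in> {0..int N}" by simp
    then have "z \<in> F" unfolding F_def zz by (rule imageI)
    then show ?thesis using z by blast
  qed
  moreover have "finite F" unfolding F_def by simp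
  ultimately show ?thesis by blast
qed


lemma thin_X:
  assumes "X = sphere 0 1 \<or> X = complex_of_real ` {0..1}" "(\<epsilon>::real) > 0"
  shows "\<exists>F. finite F \<and> (\<forall>C a b. connected C \<longrightarrow> C \<subseteq> X \<longrightarrow>
           a \<in> C \<longrightarrow> b \<in> C \<longrightarrow> \<epsilon> \<le> dist a b \<longrightarrow> C \<inter> F \<noteq> {})"
  using assms(1)
proof
  assume "X = sphere 0 1"
  then show ?thesis using thin_circle[OF assms(2)] by simp
next
  assume "X = complex_of_real ` {0..1}"
  then show ?thesis using thin_interval[OF assms(2)] by simp
qed

lemma funpow_props:
  assumes "homeomorphism X X f g"
  shows "(f^^n) ` X \<subseteq> X \<and> continuous_on X (f^^n) \<and> inj_on (f^^n) X"
proof (induction n)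
  case 0
  then show ?case by (simp add: continuous_on_id)
next
  case (Suc n)
  have fX: "f ` X = X" and cf: "continuous_on X f" and gf: "\<forall>x\<in>X. g (f x) = x"
    using assms unfolding homeomorphism_def by simp_all
  have inj: "inj_on f X" by (rule inj_on_inverseI[of X g]) (use gf in blast)
  have sub: "(f^^n) ` X \<subseteq> X" using Suc by blast
  have "(f^^Suc n) ` X \<subseteq> X" using sub fX by (auto simp: image_subset_iff)
  moreover have "continuous_on X (f^^Suc n)"
    unfolding funpow.simps
    by (rule continuous_on_compose) (use Suc continuous_on_subset[OF cf sub] in simp_all)
  moreover have "inj_on (f^^Suc n) X"
    unfolding funpow.simps by (rule comp_inj_on) (use Suc inj_on_subset[OF inj sub] in simp_all)
  ultimately show ?case by blast
qed

lemma openin_sets: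
  assumes "sets M = sets (restrict_space borel X)" "openin (top_of_set X) S"
  shows "S \<in> sets M"
proof -
  obtain T where "open T" "S = X \<inter> T" using assms(2) openin_open by blast
  then have "S = (\<inter>) X T" "T \<in> sets borel" by simp_all
  then show ?thesis unfolding assms(1) sets_restrict_space by (rule image_eqI)
qed

theorem lemma3p5:
  fixes X :: "complex set" and f :: "complex \<Rightarrow> complex" and M :: "complex measure"
  assumes "X = sphere 0 1 \<or> X = complex_of_real ` {0..1}"
    and "\<exists>g. homeomorphism X X f g"
    and "sets M = sets (restrict_space borel X)"
    and "prob_space M"
    and "inner_distal f X M"
  shows "support_on X M \<subseteq> nonwandering f X"
proof
  fix x assume xs: "x \<in> support_on X M"
  obtain g where hom: "homeomorphism X X f g" using assms(2) by blast
  note fp = funpow_props[OF hom]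
  have xX: "x \<in> X" using xs unfolding support_on_def by blast
  show "x \<in> nonwandering f X"
  proof (rule ccontr)
    assume nw: "x \<notin> nonwandering f X"
    then obtain U where U: "openin (top_of_set X) U" "x \<in> U" "\<forall>n\<ge>1. U \<inter> (f^^n) ` U = {}"
      using xX unfolding nonwandering_def by blast
    have UX: "U \<subseteq> X" using U(1) by (meson openin_imp_subset)
    have lc: "locally connected X"
    proof (cases "X = sphere 0 1")
      case True then show ?thesis by (simp add: locally_connected_sphere)
    next
      case False
      then have "X = complex_of_real ` {0..1}" using assms(1) by blast
      moreover have "convex (complex_of_real ` {0..1})"
        by (rule convex_linear_image[OF linear_of_real]) (simp add: convex_real_interval)
      ultimately show ?thesis by (simp add: convex_imp_locally_connected)
    qed
    have "\<exists>u. openin (top_of_set X) u \<and> connected u \<and> x \<in> u \<and> u \<subseteq> U"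
      using lc[unfolded locally_connected, rule_format, OF conjI[OF U(1) U(2)]] .
    then obtain J where J: "openin (top_of_set X) J" "connected J" "x \<in> J" "J \<subseteq> U"
      by blast
    have JX: "J \<subseteq> X" using J(4) UX by blast
    have "\<forall>U. openin (top_of_set X) U \<and> x \<in> U \<longrightarrow> emeasure M U > 0"
      using xs unfolding support_on_def by blast
    then have pos: "emeasure M J > 0" using J(1,3) by blast
    have disj: "(f^^m) ` J \<inter> (f^^n) ` J = {}" if "m < n" for m n
    proof (rule ccontr)
      assume "(f^^m) ` J \<inter> (f^^n) ` J \<noteq> {}"
      then obtain u v where uv: "u \<in> J" "v \<in> J" "(f^^m) u = (f^^n) v" by auto
      define k where "k = n - m"
      have nk: "n = m + k" and k1: "k \<ge> 1" using that by (auto simp: k_def)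
      have "(f^^n) v = (f^^m) ((f^^k) v)" unfolding nk funpow_add by simp
      moreover have "(f^^k) v \<in> X" using fp[of k] uv(2) JX by blast
      moreover have "u \<in> X" using uv(1) JX by blast
      moreover have "inj_on (f^^m) X" using fp[of m] by blast
      ultimately have "u = (f^^k) v" using uv(3) by (simp add: inj_on_eq_iff)
      then have "u \<in> U \<inter> (f^^k) ` U" using uv J(4) by blast
      then show False using U(3) k1 by blast
    qed
    have JP: "J \<subseteq> proximal_cell f X x"
    proof
      fix y assume yJ: "y \<in> J"
      have yX: "y \<in> X" using yJ JX by blast
      define D where "D = (\<lambda>n::int. dist (zorbit f X n x) (zorbit f X n y))"
      have bdd: "bdd_below (range D)" unfolding D_def by (rule bdd_belowI[of _ 0]) auto
      have ge: "0 \<le> (INF n. D n)" by (rule cINF_greatest) (auto simp: D_def)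
      have key: "\<exists>n. D n < \<epsilon>" if ep: "\<epsilon> > 0" for \<epsilon>
      proof (rule ccontr)
        assume nex: "\<not> (\<exists>n. D n < \<epsilon>)"
        have Dn: "D (int n) = dist ((f^^n) x) ((f^^n) y)" for n :: nat
          by (simp add: D_def zorbit_def)
        obtain F where F: "finite F" "\<And>C a b. connected C \<Longrightarrow> C \<subseteq> X \<Longrightarrow>
           a \<in> C \<Longrightarrow> b \<in> C \<Longrightarrow> \<epsilon> \<le> dist a b \<Longrightarrow> C \<inter> F \<noteq> {}"
          using thin_X[OF assms(1) ep] by blast
        have "\<exists>q. q \<in> (f^^n) ` J \<inter> F" for n
        proof -
          have "connected ((f^^n) ` J)"
            by (rule connected_continuous_image[OF continuous_on_subset J(2)]) (use fp[of n] JX in blast)+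
          moreover have "(f^^n) ` J \<subseteq> X" using fp[of n] JX by blast
          moreover have "(f^^n) x \<in> (f^^n) ` J" "(f^^n) y \<in> (f^^n) ` J" using J(3) yJ by simp_all
          moreover have "\<epsilon> \<le> dist ((f^^n) x) ((f^^n) y)" using nex Dn[of n] by (metis not_less)
          ultimately have "(f^^n) ` J \<inter> F \<noteq> {}" by (rule F(2))
          then show ?thesis by blast
        qed
        then obtain p where p: "\<And>n. p n \<in> (f^^n) ` J \<inter> F" by metis
        have "inj p"
        proof (rule injI)
          fix m n assume pmn: "p m = p n"
          show "m = n"
          proof (rule ccontr)
            assume "m \<noteq> n"
            then have "m < n \<or> n < m" by arith
            moreover have "p m \<in> (f^^m) ` J" "p n \<in> (f^^n) ` J" using p by blast+
            ultimately show False using disj[of m n] disj[of n m] pmn by auto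
          qed
        qed
        moreover have "range p \<subseteq> F" using p by blast
        moreover have "finite (range p)" using F(1) \<open>range p \<subseteq> F\<close> by (rule finite_subset[rotated])
        ultimately have "finite (UNIV :: nat set)"
          using finite_imageD by blast
        then show False by simp
      qed
      have le: "(INF n. D n) \<le> 0"
      proof (rule ccontr)
        assume "\<not> (INF n. D n) \<le> 0"
        then have "(INF n. D n) > 0" by simp
        then obtain n where "D n < (INF n. D n)" using key by blast
        moreover have "(INF n. D n) \<le> D n" by (rule cINF_lower[OF bdd]) simp
        ultimately show False by simp
      qed
      have "(INF n. D n) = 0" using ge le by simp
      then show "y \<in> proximal_cell f X x" unfolding proximal_cell_def D_def using yX by simp
    qed
    let ?I = "(top_of_set X) interior_of (proximal_cell f X x)"
    have "J \<subseteq> ?I" using interior_of_maximal[OF JP J(1)] .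
    moreover have "?I \<in> sets M" by (rule openin_sets[OF assms(3)]) simp
    ultimately have "emeasure M J \<le> emeasure M ?I" by (rule emeasure_mono)
    moreover have "emeasure M ?I = 0" using assms(5) xX unfolding inner_distal_def by blast
    ultimately show False using pos by simp
  qed
qed

end
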